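(* Fix $S$. For an $S$-regular graph $G$ on $n$ vertices, $\lambda_B>\sqrt{\lambda_S}-o(1)$, where $o(1)$ denotes a quantity tending to $0$ as $n\to\infty$.
   Context: All graphs are simple, undirected and connected. For a $k\times k$ matrix $S=(s_{ij})$ with nonnegative integer entries, $G=(V,E)$ is $S$-regular if $V$ is partitioned into nonempty cells $V_1,\dots,V_k$ such that every vertex of $V_i$ has exactly $s_{ij}$ neighbours in $V_j$. Let $A$ be the adjacency matrix, $n=|V|>k$. The subspace $W=\mathrm{span}\{\mathbf{1}_{V_1},\dots,\mathbf{1}_{V_k}\}$ is $A$-invariant with eigenvalues on $W$ equal to those of $S$; the eigenvalues of $A$ on $W^\perp$ are the bulk eigenvalues, and $\lambda_B$ is the largest absolute value of a bulk eigenvalue. $\lambda_S$ is the largest eigenvalue of $S$. *)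

theory Defs
  imports Complex_Main
begin

text \<open>Graphs on the vertex set {0..<n}: E is the (symmetric, irreflexive) adjacency relation.
  A partition into k cells is given by cell :: nat => nat, vertex v lying in cell (cell v) < k.\<close>

definition simple_graph :: "nat \<Rightarrow> (nat \<Rightarrow> nat \<Rightarrow> bool) \<Rightarrow> bool" where
  "simple_graph n E \<longleftrightarrow> (\<forall>u v. E u v \<longrightarrow> u < n \<and> v < n \<and> u \<noteq> v \<and> E v u)"

definition connected_graph :: "nat \<Rightarrow> (nat \<Rightarrow> nat \<Rightarrow> bool) \<Rightarrow> bool" where
  "connected_graph n E \<longleftrightarrow> (\<forall>u<n. \<forall>v<n. E\<^sup>*\<^sup>* u v)"

definition S_regular ::
  "nat \<Rightarrow> (nat \<Rightarrow> nat \<Rightarrow> nat) \<Rightarrow> nat \<Rightarrow> (nat \<Rightarrow> nat \<Rightarrow> bool) \<Rightarrow> (nat \<Rightarrow> nat) \<Rightarrow> bool" where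
  "S_regular k S n E cell \<longleftrightarrow>
     simple_graph n E \<and> connected_graph n E \<and>
     (\<forall>v<n. cell v < k) \<and>
     (\<forall>i<k. \<exists>v<n. cell v = i) \<and>
     (\<forall>v<n. \<forall>j<k. card {u. u < n \<and> E v u \<and> cell u = j} = S (cell v) j)"

text \<open>mu is an eigenvalue of A restricted to the orthogonal complement W^perp of
  W = span of the cell indicator vectors (a bulk eigenvalue).\<close>
definition bulk_eigenvalue ::
  "nat \<Rightarrow> (nat \<Rightarrow> nat \<Rightarrow> bool) \<Rightarrow> nat \<Rightarrow> (nat \<Rightarrow> nat) \<Rightarrow> real \<Rightarrow> bool" where
  "bulk_eigenvalue n E k cell \<mu> \<longleftrightarrow>
     (\<exists>x :: nat \<Rightarrow> real.
        (\<forall>v. n \<le> v \<longrightarrow> x v = 0) \<and> (\<exists>v<n. x v \<noteq> 0) \<and>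
        (\<forall>i<k. (\<Sum>v\<in>{v. v < n \<and> cell v = i}. x v) = 0) \<and>
        (\<forall>v<n. (\<Sum>u\<in>{u. u < n \<and> E v u}. x u) = \<mu> * x v))"

definition lambda_B :: "nat \<Rightarrow> (nat \<Rightarrow> nat \<Rightarrow> bool) \<Rightarrow> nat \<Rightarrow> (nat \<Rightarrow> nat) \<Rightarrow> real" where
  "lambda_B n E k cell = Max {\<bar>\<mu>\<bar> | \<mu>. bulk_eigenvalue n E k cell \<mu>}"

definition lambda_S :: "nat \<Rightarrow> (nat \<Rightarrow> nat \<Rightarrow> nat) \<Rightarrow> real" where
  "lambda_S k S = Max {\<mu>. \<exists>y :: nat \<Rightarrow> real. (\<exists>i<k. y i \<noteq> 0) \<and>
       (\<forall>i<k. (\<Sum>j<k. real (S i j) * y j) = \<mu> * y i)}"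

end

theory Submission imports Defs "HOL-Analysis.Function_Topology" "Jordan_Normal_Form.Spectral_Radius" begin

definition Aop :: "nat \<Rightarrow> (nat \<Rightarrow> nat \<Rightarrow> bool) \<Rightarrow> (nat \<Rightarrow> real) \<Rightarrow> nat \<Rightarrow> real" where
  "Aop n E x = (\<lambda>v. if v < n then (\<Sum>u\<in>{u. u < n \<and> E v u}. x u) else 0)"

definition ip :: "nat \<Rightarrow> (nat \<Rightarrow> real) \<Rightarrow> (nat \<Rightarrow> real) \<Rightarrow> real" where
  "ip n x y = (\<Sum>v<n. x v * y v)"

definition subsp :: "nat \<Rightarrow> (nat \<Rightarrow> real) set \<Rightarrow> (nat \<Rightarrow> real) set" where
  "subsp n Cs = {x. (\<forall>v. n \<le> v \<longrightarrow> x v = 0) \<and> (\<forall>c\<in>Cs. ip n c x = 0)}"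

lemma Aop_alt: "Aop n E x v = (if v < n then (\<Sum>u<n. if E v u then x u else 0) else 0)"
  unfolding Aop_def by (simp add: sum.If_cases Int_def conj_commute)

lemma Aop_lin: "Aop n E (\<lambda>v. a * x v + b * y v) = (\<lambda>v. a * Aop n E x v + b * Aop n E y v)"
  unfolding Aop_def by (auto simp: sum.distrib sum_distrib_left)

lemma ip_lin2: "ip n x (\<lambda>v. a * y v + b * z v) = a * ip n x y + b * ip n x z"
  unfolding ip_def by (simp add: sum.distrib sum_distrib_left algebra_simps)

lemma ip_lin1: "ip n (\<lambda>v. a * y v + b * z v) x = a * ip n y x + b * ip n z x"
  unfolding ip_def by (simp add: sum.distrib sum_distrib_left algebra_simps)

lemma ip_comm: "ip n x y = ip n y x"
  unfolding ip_def by (simp add: mult.commute)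

lemma ip_self_nonneg: "ip n x x \<ge> 0"
  unfolding ip_def by (simp add: sum_nonneg)

lemma ip_self_zero: "ip n x x = 0 \<Longrightarrow> v < n \<Longrightarrow> x v = 0"
  unfolding ip_def by (subst (asm) sum_nonneg_eq_0_iff) auto

lemma Aop_sym:
  assumes "simple_graph n E"
  shows "ip n (Aop n E x) y = ip n x (Aop n E y)"
proof -
  have "ip n (Aop n E x) y = (\<Sum>v<n. \<Sum>u<n. (if E v u then x u * y v else 0))"
    unfolding ip_def Aop_alt by (auto simp: sum_distrib_right intro!: sum.cong)
  also have "\<dots> = (\<Sum>u<n. \<Sum>v<n. (if E v u then x u * y v else 0))"
    by (rule sum.swap)
  also have "\<dots> = ip n x (Aop n E y)"
    unfolding ip_def Aop_alt using assms unfolding simple_graph_def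
    by (auto simp: sum_distrib_left intro!: sum.cong)
  finally show ?thesis .
qed

definition fq :: "nat \<Rightarrow> (nat \<Rightarrow> nat \<Rightarrow> bool) \<Rightarrow> (nat \<Rightarrow> real) \<Rightarrow> real" where
  "fq n E x = ip n (Aop n E x) (Aop n E x)"

lemma fq_alt: "fq n E x = (\<Sum>v<n. (\<Sum>u<n. if E v u then x u else 0)^2)"
  unfolding fq_def ip_def Aop_alt by (simp add: power2_eq_square)

lemma fq_alt2: "fq n E x = (\<Sum>v<n. (\<Sum>u\<in>{u. u < n \<and> E v u}. x u)^2)"
  unfolding fq_def ip_def Aop_def by (simp add: power2_eq_square)

lemma fq_cont: "continuous_on UNIV (fq n E)"
  unfolding fq_alt2 by (intro continuous_intros) auto

lemma ip_cont: "continuous_on UNIV (\<lambda>x. ip n c x)"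
  unfolding ip_def by (intro continuous_intros) auto

lemma ip_self_cont: "continuous_on UNIV (\<lambda>x. ip n x x)"
  unfolding ip_def by (intro continuous_intros) auto

lemma quad_zero:
  fixes c K :: real
  assumes "\<And>t. 2*t*c + t^2*K \<le> 0"
  shows "c = 0"
proof -
  define a where "a = \<bar>K\<bar> + 1"
  define t where "t = c / a"
  have pos: "a > 0" unfolding a_def by simp
  have ta: "t * a = c" unfolding t_def using pos by simp
  have "2*t*c + t^2*K \<le> 0" by (rule assms)
  hence h1: "(2*t*c + t^2*K) * a^2 \<le> 0"
    by (simp add: mult_nonpos_nonneg)
  have "(2*t*c + t^2*K) * a^2 = 2*c*(t * a)*a + (t * a)^2*K"
    by (simp add: algebra_simps power2_eq_square)
  also have "\<dots> = c^2 * (2*a + K)" unfolding ta by (simp add: algebra_simps power2_eq_square)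
  finally have "c^2 * (2*a + K) \<le> 0" using h1 by simp
  moreover have "2*a + K > 0" unfolding a_def by (auto simp: abs_if)
  ultimately have "c^2 \<le> 0" by (simp add: mult_le_0_iff)
  thus ?thesis by simp
qed

lemma compact_box: "compact (PiE UNIV (\<lambda>v::nat. if v < n then {-1..1::real} else {0}))"
proof -
  have "compactin (product_topology (\<lambda>i. euclidean) UNIV) (PiE UNIV (\<lambda>v::nat. if v < n then {-1..1::real} else {0}))"
    by (subst compactin_PiE) auto
  thus ?thesis by (simp add: euclidean_product_topology)
qed


lemma subsp_lin: "x \<in> subsp n Cs \<Longrightarrow> y \<in> subsp n Cs \<Longrightarrow> (\<lambda>v. a * x v + b * y v) \<in> subsp n Cs"
  unfolding subsp_def by (auto simp: ip_lin2)

lemma subsp_scale: "x \<in> subsp n Cs \<Longrightarrow> (\<lambda>v. a * x v) \<in> subsp n Cs"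
  using subsp_lin[of x n Cs x a 0] by simp

lemma Aop_add: "Aop n E (\<lambda>v. x v + t * y v) = (\<lambda>v. Aop n E x v + t * Aop n E y v)"
  unfolding Aop_def by (auto simp: sum.distrib sum_distrib_left)

lemma Aop_scale: "Aop n E (\<lambda>v. c * x v) = (\<lambda>v. c * Aop n E x v)"
  unfolding Aop_def by (auto simp: sum_distrib_left)

lemma fq_expand: "fq n E (\<lambda>v. x v + t * y v) = fq n E x + 2*t*ip n (Aop n E x) (Aop n E y) + t^2 * fq n E y"
  unfolding fq_def Aop_add unfolding ip_def
  by (simp add: sum.distrib sum_distrib_left power2_eq_square algebra_simps)

lemma fq_scale: "fq n E (\<lambda>v. c * x v) = c^2 * fq n E x"
  unfolding fq_def Aop_scale unfolding ip_def
  by (simp add: sum_distrib_left power2_eq_square algebra_simps)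

lemma ip_scale: "ip n (\<lambda>v. c * x v) (\<lambda>v. c * x v) = c^2 * ip n x x"
  unfolding ip_def by (simp add: sum_distrib_left power2_eq_square algebra_simps)

lemma ip_add_self: "ip n (\<lambda>v. x v + t * y v) (\<lambda>v. x v + t * y v) = ip n x x + 2*t*ip n x y + t^2 * ip n y y"
  unfolding ip_def by (simp add: sum.distrib sum_distrib_left power2_eq_square algebra_simps)

lemma fq_nonneg: "fq n E x \<ge> 0"
  unfolding fq_def by (rule ip_self_nonneg)

lemma variational:
  assumes sg: "simple_graph n E"
    and inv: "\<And>x. x \<in> subsp n Cs \<Longrightarrow> Aop n E x \<in> subsp n Cs"
    and x0: "x0 \<in> subsp n Cs" and x0pos: "ip n x0 x0 > 0"
  shows "\<exists>z \<mu>. z \<in> subsp n Cs \<and> (\<exists>v<n. z v \<noteq> 0) \<and> (\<forall>v<n. Aop n E z v = \<mu> * z v)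
            \<and> fq n E x0 \<le> \<mu>^2 * ip n x0 x0"
proof -
  define K where "K = subsp n Cs \<inter> {x. ip n x x = 1}"
  have Keq: "K = (\<Inter>v\<in>{n..}. {x. x v = 0}) \<inter> (\<Inter>c\<in>Cs. {x. ip n c x = 0}) \<inter> {x. ip n x x = 1}"
    unfolding K_def subsp_def by auto
  have "closed K" unfolding Keq
    by (intro closed_Int closed_INT ballI closed_Collect_eq ip_cont ip_self_cont continuous_on_const
        continuous_on_product_coordinates)
  have Kbox: "K \<subseteq> PiE UNIV (\<lambda>v::nat. if v < n then {-1..1::real} else {0})"
  proof
    fix x assume xK: "x \<in> K"
    show "x \<in> PiE UNIV (\<lambda>v::nat. if v < n then {-1..1::real} else {0})"
    proof (rule PiE_I)
      fix v :: nat
      show "x v \<in> (if v < n then {-1..1} else {0})"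
      proof (cases "v < n")
        case True
        have "(x v)^2 \<le> ip n x x" unfolding ip_def power2_eq_square
          by (rule member_le_sum) (use True in auto)
        hence "(x v)^2 \<le> 1" using xK unfolding K_def by simp
        hence "\<bar>x v\<bar> \<le> 1" by (simp add: abs_square_le_1)
        thus ?thesis using True by auto
      next
        case False thus ?thesis using xK unfolding K_def subsp_def by auto
      qed
    qed auto
  qed
  have "compact K"
  proof -
    have "compact (PiE UNIV (\<lambda>v::nat. if v < n then {-1..1::real} else {0}) \<inter> K)"
      using compact_box \<open>closed K\<close> by (rule compact_Int_closed)
    moreover have "PiE UNIV (\<lambda>v::nat. if v < n then {-1..1::real} else {0}) \<inter> K = K" using Kbox by blast
    ultimately show ?thesis by simp
  qed
  define s0 where "s0 = 1 / sqrt (ip n x0 x0)"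
  have s0sq: "s0^2 * ip n x0 x0 = 1" unfolding s0_def using x0pos
    by (simp add: power_divide)
  have "(\<lambda>v. s0 * x0 v) \<in> K" unfolding K_def using subsp_scale[OF x0] ip_scale[of n s0 x0] s0sq by simp
  hence "K \<noteq> {}" by blast
  from continuous_attains_sup[OF \<open>compact K\<close> this continuous_on_subset[OF fq_cont subset_UNIV]]
  obtain z where zK: "z \<in> K" and zmax: "\<And>y. y \<in> K \<Longrightarrow> fq n E y \<le> fq n E z" by blast
  define lam where "lam = fq n E z"
  have zsub: "z \<in> subsp n Cs" and zz: "ip n z z = 1" using zK unfolding K_def by auto
  have lam0: "lam \<ge> 0" unfolding lam_def by (rule fq_nonneg)
  have x0bound: "fq n E x0 \<le> lam * ip n x0 x0"
  proof -
    have "fq n E (\<lambda>v. s0 * x0 v) \<le> lam" unfolding lam_def by (rule zmax) fact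
    hence "s0^2 * fq n E x0 \<le> lam" by (simp add: fq_scale)
    hence "s0^2 * fq n E x0 * ip n x0 x0 \<le> lam * ip n x0 x0" using x0pos by simp
    thus ?thesis using s0sq by (simp add: algebra_simps)
  qed
  \<comment> \<open>Lagrange step\<close>
  have lagr: "ip n (Aop n E z) (Aop n E y) = 0" if ysub: "y \<in> subsp n Cs" and yz: "ip n z y = 0" for y
  proof -
    let ?B = "ip n (Aop n E z) (Aop n E y)"
    have "2*t*?B + t^2*(fq n E y - lam * ip n y y) \<le> 0" for t
    proof -
      define w where "w = (\<lambda>v. z v + t * y v)"
      have wsub: "w \<in> subsp n Cs" unfolding w_def using subsp_lin[OF zsub ysub, of 1 t] by simp
      have ww: "ip n w w = 1 + t^2 * ip n y y" unfolding w_def ip_add_self zz yz by simp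
      have wpos: "ip n w w > 0" unfolding ww using ip_self_nonneg[of n y]
        by (simp add: add_pos_nonneg)
      define s where "s = 1 / sqrt (ip n w w)"
      have ssq: "s^2 * ip n w w = 1" unfolding s_def using wpos by (simp add: power_divide)
      have "(\<lambda>v. s * w v) \<in> K" unfolding K_def using subsp_scale[OF wsub] ip_scale[of n s w] ssq by simp
      hence "fq n E (\<lambda>v. s * w v) \<le> lam" unfolding lam_def by (rule zmax)
      hence "s^2 * fq n E w \<le> lam" by (simp add: fq_scale)
      hence "s^2 * fq n E w * ip n w w \<le> lam * ip n w w" using wpos by simp
      hence "fq n E w \<le> lam * ip n w w" using ssq by (simp add: algebra_simps)
      hence "lam + 2*t*?B + t^2 * fq n E y \<le> lam * (1 + t^2 * ip n y y)"
        unfolding ww unfolding w_def fq_expand lam_def by simp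
      thus ?thesis by (simp add: algebra_simps)
    qed
    thus ?thesis by (rule quad_zero)
  qed
  define w where "w = (\<lambda>v. 1 * Aop n E (Aop n E z) v + (- lam) * z v)"
  have wsub: "w \<in> subsp n Cs" unfolding w_def by (intro subsp_lin inv zsub)
  have zw: "ip n z w = 0"
    unfolding w_def ip_lin2 using Aop_sym[OF sg, of z "Aop n E z"] zz
    unfolding lam_def fq_def by (simp add: ip_comm)
  have "ip n (Aop n E z) (Aop n E w) = 0" by (rule lagr[OF wsub zw])
  hence "ip n (Aop n E (Aop n E z)) w = 0" using Aop_sym[OF sg, of "Aop n E z" w] by simp
  hence "ip n w w = 0" unfolding w_def[of] ip_lin1 using zw[unfolded w_def] by simp
  hence weq: "Aop n E (Aop n E z) v = lam * z v" if "v < n" for v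
    using ip_self_zero[of n w v] that unfolding w_def by simp
  define mu where "mu = sqrt lam"
  have mu2: "mu^2 = lam" unfolding mu_def using lam0 by simp
  define y where "y = (\<lambda>v. 1 * Aop n E z v + mu * z v)"
  have ysub: "y \<in> subsp n Cs" unfolding y_def by (intro subsp_lin inv zsub)
  have znz: "\<exists>v<n. z v \<noteq> 0"
  proof (rule ccontr)
    assume "\<not> ?thesis"
    hence "ip n z z = 0" unfolding ip_def by simp
    thus False using zz by simp
  qed
  show ?thesis
  proof (cases "\<exists>v<n. y v \<noteq> 0")
    case True
    have "Aop n E y v = mu * y v" if "v < n" for v
    proof -
      have "Aop n E y v = Aop n E (Aop n E z) v + mu * Aop n E z v"
        unfolding y_def using Aop_add[of n E "Aop n E z" mu z] by simp
      also have "\<dots> = mu^2 * z v + mu * Aop n E z v" using weq[OF that] mu2 by simp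
      also have "\<dots> = mu * y v" unfolding y_def by (simp add: algebra_simps power2_eq_square)
      finally show ?thesis .
    qed
    thus ?thesis using ysub True x0bound mu2 by blast
  next
    case False
    have "Aop n E z v = (- mu) * z v" if "v < n" for v
      using False that unfolding y_def by (auto simp: algebra_simps)
    moreover have "(- mu)^2 = lam" using mu2 by simp
    ultimately show ?thesis using zsub znz x0bound by metis
  qed
qed


lemma mat_eigen:
  fixes a :: "nat \<Rightarrow> nat \<Rightarrow> real"
  assumes nz: "\<exists>i<m. y i \<noteq> 0" and ev: "\<forall>i<m. (\<Sum>j<m. a i j * y j) = \<mu> * y i"
  shows "\<mu> \<in> spectrum (mat m m (\<lambda>(i,j). a i j))"
proof -
  let ?M = "mat m m (\<lambda>(i,j). a i j)"
  have "eigenvector ?M (vec m y) \<mu>"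
    unfolding eigenvector_def
  proof (intro conjI)
    show "vec m y \<in> carrier_vec (dim_row ?M)" by simp
    show "vec m y \<noteq> 0\<^sub>v (dim_row ?M)"
    proof
      assume "vec m y = 0\<^sub>v (dim_row ?M)"
      hence "\<forall>i<m. y i = 0" by (metis dim_row_mat(1) index_vec index_zero_vec(1))
      thus False using nz by auto
    qed
    show "?M *\<^sub>v vec m y = \<mu> \<cdot>\<^sub>v vec m y"
    proof (rule eq_vecI)
      fix i assume "i < dim_vec (\<mu> \<cdot>\<^sub>v vec m y)"
      hence i: "i < m" by simp
      have "(?M *\<^sub>v vec m y) $ i = (\<Sum>j<m. a i j * y j)"
        using i by (simp add: scalar_prod_def row_def lessThan_atLeast0)
      also have "\<dots> = \<mu> * y i" using ev i by simp
      finally show "(?M *\<^sub>v vec m y) $ i = (\<mu> \<cdot>\<^sub>v vec m y) $ i" using i by simp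
    qed simp
  qed
  thus ?thesis unfolding spectrum_def eigenvalue_def by auto
qed

lemma finite_mat_eigen:
  fixes a :: "nat \<Rightarrow> nat \<Rightarrow> real"
  shows "finite {\<mu>. \<exists>y. (\<exists>i<m. y i \<noteq> 0) \<and> (\<forall>i<m. (\<Sum>j<m. a i j * y j) = \<mu> * y i)}"
proof (rule finite_subset)
  show "{\<mu>. \<exists>y. (\<exists>i<m. y i \<noteq> 0) \<and> (\<forall>i<m. (\<Sum>j<m. a i j * y j) = \<mu> * y i)}
        \<subseteq> spectrum (mat m m (\<lambda>(i,j). a i j))" using mat_eigen by blast
  show "finite (spectrum (mat m m (\<lambda>(i,j). a i j)))"
    by (rule card_finite_spectrum(1)[of _ m]) simp
qed

lemma finite_bulk:
  shows "finite {\<mu>. bulk_eigenvalue n E k cell \<mu>}"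
proof (rule finite_subset)
  show "finite {\<mu>::real. \<exists>y. (\<exists>i<n. y i \<noteq> 0) \<and> (\<forall>i<n. (\<Sum>j<n. (if E i j then 1 else 0) * y j) = \<mu> * y i)}"
    using finite_mat_eigen[of n "\<lambda>i j. if E i j then 1 else 0"] by simp
  show "{\<mu>. bulk_eigenvalue n E k cell \<mu>} \<subseteq> {\<mu>::real. \<exists>y. (\<exists>i<n. y i \<noteq> 0) \<and> (\<forall>i<n. (\<Sum>j<n. (if E i j then 1 else 0) * y j) = \<mu> * y i)}"
  proof
    fix \<mu> assume "\<mu> \<in> {\<mu>. bulk_eigenvalue n E k cell \<mu>}"
    then obtain x where nz: "\<exists>v<n. x v \<noteq> 0" and ev: "\<forall>v<n. (\<Sum>u\<in>{u. u < n \<and> E v u}. x u) = \<mu> * x v"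
      unfolding bulk_eigenvalue_def by auto
    have "(\<Sum>j<n. (if E i j then 1 else 0) * x j) = (\<Sum>u\<in>{u. u < n \<and> E i u}. x u)" for i
    proof -
      have "(\<Sum>j<n. (if E i j then 1 else 0) * x j) = (\<Sum>j<n. if j \<in> {u. E i u} then x j else 0)"
        by (intro sum.cong) auto
      also have "\<dots> = sum x ({..<n} \<inter> {u. E i u})" by (simp add: sum.inter_restrict)
      also have "{..<n} \<inter> {u. E i u} = {u. u < n \<and> E i u}" by auto
      finally show ?thesis .
    qed
    thus "\<mu> \<in> {\<mu>. \<exists>y. (\<exists>i<n. y i \<noteq> 0) \<and> (\<forall>i<n. (\<Sum>j<n. (if E i j then 1 else 0) * y j) = \<mu> * y i)}"
      using nz ev by auto
  qed
qed


lemma Sreg_simple: "S_regular k S n E cell \<Longrightarrow> simple_graph n E"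
  unfolding S_regular_def by simp
lemma Sreg_cnt: "S_regular k S n E cell \<Longrightarrow> v < n \<Longrightarrow> j < k \<Longrightarrow> card {u. u < n \<and> E v u \<and> cell u = j} = S (cell v) j"
  unfolding S_regular_def by simp
lemma Sreg_cell: "S_regular k S n E cell \<Longrightarrow> v < n \<Longrightarrow> cell v < k"
  unfolding S_regular_def by simp
lemma Sreg_ne: "S_regular k S n E cell \<Longrightarrow> j < k \<Longrightarrow> \<exists>v<n. cell v = j"
  unfolding S_regular_def by simp
lemma Sreg_E: "S_regular k S n E cell \<Longrightarrow> E u v \<Longrightarrow> u < n \<and> v < n \<and> u \<noteq> v \<and> E v u"
  unfolding S_regular_def simple_graph_def by blast
lemma Sreg_conn: "S_regular k S n E cell \<Longrightarrow> connected_graph n E"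
  unfolding S_regular_def by simp

lemma sum_cells_A:
  assumes "S_regular k S n E cell" "A \<subseteq> {..<n}"
  shows "sum g A = (\<Sum>j<k. \<Sum>u\<in>{u\<in>A. cell u = j}. g u)"
proof -
  have fin: "finite A" using assms(2) finite_subset by blast
  have "cell ` A \<subseteq> {..<k}" using Sreg_cell[OF assms(1)] assms(2) by auto
  from sum.group[OF fin _ this, of g] show ?thesis by simp
qed

lemma sum_cells:
  assumes "S_regular k S n E cell"
  shows "(\<Sum>u<n. g u) = (\<Sum>j<k. \<Sum>u\<in>{u. u < n \<and> cell u = j}. g u)"
  using sum_cells_A[OF assms, of "{..<n}" g] by simp

lemma deg:
  assumes "S_regular k S n E cell" "v < n"
  shows "card {u. u < n \<and> E v u} = (\<Sum>j<k. S (cell v) j)"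
proof -
  have "card {u. u < n \<and> E v u} = (\<Sum>u\<in>{u. u < n \<and> E v u}. 1::nat)" by simp
  also have "\<dots> = (\<Sum>j<k. \<Sum>u\<in>{u\<in>{u. u < n \<and> E v u}. cell u = j}. 1)"
    by (rule sum_cells_A[OF assms(1)]) auto
  also have "\<dots> = (\<Sum>j<k. S (cell v) j)"
  proof (rule sum.cong)
    fix j assume "j \<in> {..<k}"
    hence "card {u. u < n \<and> E v u \<and> cell u = j} = S (cell v) j" using Sreg_cnt[OF assms(1) assms(2)] by simp
    moreover have "{u\<in>{u. u < n \<and> E v u}. cell u = j} = {u. u < n \<and> E v u \<and> cell u = j}" by auto
    ultimately show "(\<Sum>u\<in>{u\<in>{u. u < n \<and> E v u}. cell u = j}. 1) = S (cell v) j" by simp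
  qed simp
  finally show ?thesis .
qed

definition Cperp :: "nat \<Rightarrow> (nat \<Rightarrow> nat) \<Rightarrow> (nat \<Rightarrow> real) set" where
  "Cperp k cell = (\<lambda>i. \<lambda>v. if cell v = i then 1 else 0) ` {..<k}"

lemma Aop_ind:
  assumes "S_regular k S n E cell" "u < n" "i < k"
  shows "Aop n E (\<lambda>v. if cell v = i then 1 else 0) u = real (S (cell u) i)"
proof -
  have "Aop n E (\<lambda>v. if cell v = i then 1 else 0) u = real (card ({w. w < n \<and> E u w} \<inter> {w. cell w = i}))"
    unfolding Aop_def using assms(2) by (simp add: sum.If_cases)
  also have "{w. w < n \<and> E u w} \<inter> {w. cell w = i} = {w. w < n \<and> E u w \<and> cell w = i}" by auto
  finally show ?thesis using Sreg_cnt[OF assms] by simp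
qed

lemma ip_ind: "ip n (\<lambda>v. if cell v = i then 1 else 0) x = (\<Sum>u\<in>{u. u < n \<and> cell u = i}. x u)"
proof -
  have "ip n (\<lambda>v. if cell v = i then 1 else 0) x = (\<Sum>v<n. if v \<in> {v. cell v = i} then x v else 0)"
    unfolding ip_def by (intro sum.cong) auto
  also have "\<dots> = sum x ({..<n} \<inter> {v. cell v = i})" by (simp add: sum.inter_restrict)
  also have "{..<n} \<inter> {v. cell v = i} = {u. u < n \<and> cell u = i}" by auto
  finally show ?thesis .
qed

lemma Wperp_inv:
  assumes sr: "S_regular k S n E cell" and x: "x \<in> subsp n (Cperp k cell)"
  shows "Aop n E x \<in> subsp n (Cperp k cell)"
  unfolding subsp_def
proof (intro CollectI conjI allI impI ballI)
  fix v assume "n \<le> v" thus "Aop n E x v = 0" unfolding Aop_def by simp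
next
  fix c assume "c \<in> Cperp k cell"
  then obtain i where i: "i < k" and c: "c = (\<lambda>v. if cell v = i then 1 else 0)" unfolding Cperp_def by auto
  have "ip n c (Aop n E x) = ip n (Aop n E c) x"
    using Aop_sym[OF Sreg_simple[OF sr], of c x] by simp
  also have "\<dots> = (\<Sum>u<n. real (S (cell u) i) * x u)"
    unfolding ip_def c using Aop_ind[OF sr _ i] by simp
  also have "\<dots> = (\<Sum>j<k. \<Sum>u\<in>{u. u < n \<and> cell u = j}. real (S (cell u) i) * x u)"
    by (rule sum_cells[OF sr])
  also have "\<dots> = (\<Sum>j<k. real (S j i) * ip n (\<lambda>v. if cell v = j then 1 else 0) x)"
    unfolding ip_ind by (simp add: sum_distrib_left)
  also have "\<dots> = 0"
  proof (rule sum.neutral, intro ballI)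
    fix j assume "j \<in> {..<k}"
    hence "(\<lambda>v. if cell v = j then 1 else 0) \<in> Cperp k cell" unfolding Cperp_def by auto
    thus "real (S j i) * ip n (\<lambda>v. if cell v = j then 1 else 0) x = 0" using x unfolding subsp_def by auto
  qed
  finally show "ip n c (Aop n E x) = 0" .
qed


definition CW :: "nat \<Rightarrow> (nat \<Rightarrow> nat) \<Rightarrow> (nat \<Rightarrow> real) set" where
  "CW n cell = {(\<lambda>w. (if w = u then 1 else 0) - (if w = v then 1 else 0)) | u v. u < n \<and> v < n \<and> cell u = cell v}"

definition rep :: "nat \<Rightarrow> (nat \<Rightarrow> nat) \<Rightarrow> nat \<Rightarrow> nat" where
  "rep n cell j = (SOME v. v < n \<and> cell v = j)"

lemma rep: assumes "S_regular k S n E cell" "j < k" shows "rep n cell j < n \<and> cell (rep n cell j) = j"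
  unfolding rep_def using someI_ex[OF Sreg_ne[OF assms]] by blast

lemma sum_delta_mult: "u < (n::nat) \<Longrightarrow> (\<Sum>w<n. (if w = u then 1 else 0) * x w) = (x u::real)"
proof -
  assume u: "u < n"
  have "(\<Sum>w<n. (if w = u then 1 else 0) * x w) = (\<Sum>w<n. if w = u then x u else 0)"
    by (rule sum.cong) auto
  also have "\<dots> = x u" using sum.delta[of "{..<n}" u "\<lambda>_. x u"] u by simp
  finally show ?thesis .
qed

lemma ip_delta: "u < n \<Longrightarrow> v < n \<Longrightarrow> ip n (\<lambda>w. (if w = u then 1 else 0) - (if w = v then 1 else 0)) x = x u - x v"
  unfolding ip_def left_diff_distrib sum_subtractf by (simp add: sum_delta_mult)

lemma CW_const:
  assumes sr: "S_regular k S n E cell" and x: "x \<in> subsp n (CW n cell)" and v: "v < n"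
  shows "x v = x (rep n cell (cell v))"
proof -
  have r: "rep n cell (cell v) < n \<and> cell (rep n cell (cell v)) = cell v" using rep[OF sr Sreg_cell[OF sr v]] .
  hence "(\<lambda>w. (if w = v then 1 else 0) - (if w = rep n cell (cell v) then 1 else 0)) \<in> CW n cell"
    unfolding CW_def using v by fastforce
  hence "ip n (\<lambda>w. (if w = v then 1 else 0) - (if w = rep n cell (cell v) then 1 else 0)) x = 0"
    using x unfolding subsp_def by auto
  thus ?thesis using ip_delta[OF v, of "rep n cell (cell v)" x] r by simp
qed

lemma Aop_W:
  assumes sr: "S_regular k S n E cell" and x: "x \<in> subsp n (CW n cell)" and v: "v < n"
  shows "Aop n E x v = (\<Sum>j<k. real (S (cell v) j) * x (rep n cell j))"
proof -
  have "Aop n E x v = (\<Sum>u\<in>{u. u < n \<and> E v u}. x u)" unfolding Aop_def using v by simp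
  also have "\<dots> = (\<Sum>j<k. \<Sum>u\<in>{u\<in>{u. u < n \<and> E v u}. cell u = j}. x u)"
    by (rule sum_cells_A[OF sr]) auto
  also have "\<dots> = (\<Sum>j<k. real (S (cell v) j) * x (rep n cell j))"
  proof (rule sum.cong)
    fix j assume j: "j \<in> {..<k}"
    have "(\<Sum>u\<in>{u\<in>{u. u < n \<and> E v u}. cell u = j}. x u) = (\<Sum>u\<in>{u. u < n \<and> E v u \<and> cell u = j}. x (rep n cell j))"
      by (rule sum.cong) (auto simp: CW_const[OF sr x])
    also have "\<dots> = real (S (cell v) j) * x (rep n cell j)" using Sreg_cnt[OF sr v] j by simp
    finally show "(\<Sum>u\<in>{u\<in>{u. u < n \<and> E v u}. cell u = j}. x u) = real (S (cell v) j) * x (rep n cell j)" .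
  qed simp
  finally show ?thesis .
qed

lemma W_inv:
  assumes sr: "S_regular k S n E cell" and x: "x \<in> subsp n (CW n cell)"
  shows "Aop n E x \<in> subsp n (CW n cell)"
  unfolding subsp_def
proof (intro CollectI conjI allI impI ballI)
  fix v assume "n \<le> v" thus "Aop n E x v = 0" unfolding Aop_def by simp
next
  fix c assume "c \<in> CW n cell"
  then obtain u v where uv: "u < n" "v < n" "cell u = cell v"
    and c: "c = (\<lambda>w. (if w = u then 1 else 0) - (if w = v then 1 else 0))" unfolding CW_def by auto
  show "ip n c (Aop n E x) = 0" unfolding c ip_delta[OF uv(1,2)]
    using Aop_W[OF sr x uv(1)] Aop_W[OF sr x uv(2)] uv(3) by simp
qed

definition Lset :: "nat \<Rightarrow> (nat \<Rightarrow> nat \<Rightarrow> nat) \<Rightarrow> real set" where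
  "Lset k S = {\<mu>. \<exists>y :: nat \<Rightarrow> real. (\<exists>i<k. y i \<noteq> 0) \<and>
       (\<forall>i<k. (\<Sum>j<k. real (S i j) * y j) = \<mu> * y i)}"

lemma lambda_S_Lset: "lambda_S k S = Max (Lset k S)"
  unfolding lambda_S_def Lset_def by simp

lemma Lset_finite: "finite (Lset k S)"
  unfolding Lset_def using finite_mat_eigen[of k "\<lambda>i j. real (S i j)"] by simp

lemma Lset_nonempty:
  assumes sr: "S_regular k S n E cell" and kpos: "0 < k"
  shows "Lset k S \<noteq> {}"
proof -
  define x0 where "x0 = (\<lambda>v. if v < n then 1 else (0::real))"
  have x0s: "x0 \<in> subsp n (CW n cell)" unfolding subsp_def
  proof (intro CollectI conjI allI impI ballI)
    fix v assume "n \<le> v" thus "x0 v = 0" unfolding x0_def by simp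
  next
    fix c assume "c \<in> CW n cell"
    then obtain u v where uv: "u < n" "v < n"
      and c: "c = (\<lambda>w. (if w = u then 1 else 0) - (if w = v then 1 else 0))" unfolding CW_def by auto
    show "ip n c x0 = 0" unfolding c ip_delta[OF uv(1,2)] using uv unfolding x0_def by simp
  qed
  have "n > 0" using Sreg_ne[OF sr kpos] by auto
  hence x0p: "ip n x0 x0 > 0" unfolding ip_def x0_def by simp
  obtain z \<mu> where z: "z \<in> subsp n (CW n cell)" and znz: "\<exists>v<n. z v \<noteq> 0"
    and ev: "\<forall>v<n. Aop n E z v = \<mu> * z v"
    using variational[OF Sreg_simple[OF sr] W_inv[OF sr] x0s x0p] by blast
  define y where "y = (\<lambda>j. z (rep n cell j))"
  have "\<mu> \<in> Lset k S"
  proof -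
    obtain v where v: "v < n" "z v \<noteq> 0" using znz by blast
    have h1: "\<exists>i<k. y i \<noteq> 0" using v CW_const[OF sr z v(1)] Sreg_cell[OF sr v(1)] unfolding y_def by auto
    have h2: "(\<Sum>j<k. real (S i j) * y j) = \<mu> * y i" if i: "i < k" for i
    proof -
      have r: "rep n cell i < n" "cell (rep n cell i) = i" using rep[OF sr i] by auto
      show ?thesis using Aop_W[OF sr z r(1)] ev r unfolding y_def by simp
    qed
    show ?thesis unfolding Lset_def using h1 h2 by blast
  qed
  thus ?thesis by blast
qed

lemma Lset_bound:
  assumes dl: "\<And>i. i < k \<Longrightarrow> (\<Sum>j<k. S i j) \<le> Dl" and mu: "\<mu> \<in> Lset k S"
  shows "\<mu> \<le> real Dl"
proof -
  obtain y where nz: "\<exists>i<k. y i \<noteq> 0" and ev: "\<forall>i<k. (\<Sum>j<k. real (S i j) * y j) = \<mu> * y i"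
    using mu unfolding Lset_def by auto
  have kne: "{..<k} \<noteq> {}" using nz by auto
  define M where "M = Max ((\<lambda>j. \<bar>y j\<bar>) ` {..<k})"
  have Mge: "\<bar>y j\<bar> \<le> M" if "j < k" for j unfolding M_def using that by (intro Max_ge) auto
  have "M \<in> (\<lambda>j. \<bar>y j\<bar>) ` {..<k}" unfolding M_def by (rule Max_in) (use kne in auto)
  then obtain i where i: "i < k" "\<bar>y i\<bar> = M" by auto
  have Mpos: "M > 0" using nz Mge by fastforce
  have "\<bar>\<mu>\<bar> * M = \<bar>\<Sum>j<k. real (S i j) * y j\<bar>" using ev i by (simp add: abs_mult)
  also have "\<dots> \<le> (\<Sum>j<k. real (S i j) * \<bar>y j\<bar>)" by (rule order_trans[OF sum_abs]) (simp add: abs_mult)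
  also have "\<dots> \<le> (\<Sum>j<k. real (S i j) * M)" by (intro sum_mono mult_left_mono Mge) auto
  also have "\<dots> = real (\<Sum>j<k. S i j) * M" by (simp add: sum_distrib_right)
  also have "\<dots> \<le> real Dl * M"
  proof -
    have "real (\<Sum>j<k. S i j) \<le> real Dl" using dl[OF i(1)] by linarith
    thus ?thesis using Mpos by (intro mult_right_mono) auto
  qed
  finally have "\<bar>\<mu>\<bar> \<le> real Dl" using Mpos by simp
  thus ?thesis by simp
qed

lemma lambda_S_bound:
  assumes sr: "S_regular k S n E cell" and kpos: "0 < k" and dl: "\<And>i. i < k \<Longrightarrow> (\<Sum>j<k. S i j) \<le> Dl"
  shows "lambda_S k S \<le> real Dl"
proof -
  have m: "Max (Lset k S) \<in> Lset k S" by (rule Max_in[OF Lset_finite Lset_nonempty[OF sr kpos]])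
  show ?thesis unfolding lambda_S_Lset by (rule Lset_bound[where S=S and k=k, OF dl m])
qed


definition csz :: "nat \<Rightarrow> (nat \<Rightarrow> nat) \<Rightarrow> nat \<Rightarrow> nat" where
  "csz n cell j = card {v. v < n \<and> cell v = j}"

lemma csz_step:
  assumes sr: "S_regular k S n E cell" and dl: "\<And>i. i < k \<Longrightarrow> (\<Sum>j<k. S i j) \<le> D"
    and e: "E v u"
  shows "csz n cell (cell u) \<le> D * csz n cell (cell v)"
proof -
  have uv: "u < n" "v < n" "E u v" using Sreg_E[OF sr e] by auto
  have cu: "cell u < k" and cv: "cell v < k" using Sreg_cell[OF sr] uv by auto
  let ?Vu = "{w. w < n \<and> cell w = cell u}"
  let ?Vv = "{x. x < n \<and> cell x = cell v}"
  let ?N = "\<lambda>x. {w. w < n \<and> E x w \<and> cell w = cell u}"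
  have sub: "?Vu \<subseteq> (\<Union>x\<in>?Vv. ?N x)"
  proof
    fix w assume w: "w \<in> ?Vu"
    have "card {x. x < n \<and> E w x \<and> cell x = cell v} = S (cell u) (cell v)"
      using Sreg_cnt[OF sr _ cv] w by auto
    also have "\<dots> = card {x. x < n \<and> E u x \<and> cell x = cell v}" using Sreg_cnt[OF sr uv(1) cv] by simp
    also have "\<dots> > 0" using uv by (subst card_gt_0_iff) auto
    finally have cpos: "0 < card {x. x < n \<and> E w x \<and> cell x = cell v}" .
    have "{x. x < n \<and> E w x \<and> cell x = cell v} \<noteq> {}"
    proof
      assume "{x. x < n \<and> E w x \<and> cell x = cell v} = {}"
      with cpos show False by simp
    qed
    then obtain x where "x < n" "E w x" "cell x = cell v" by blast
    thus "w \<in> (\<Union>x\<in>?Vv. ?N x)" using w Sreg_E[OF sr \<open>E w x\<close>] by blast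
  qed
  have "csz n cell (cell u) \<le> card (\<Union>x\<in>?Vv. ?N x)" unfolding csz_def
    by (rule card_mono[OF _ sub]) auto
  also have "\<dots> \<le> (\<Sum>x\<in>?Vv. card (?N x))" by (rule card_UN_le) auto
  also have "\<dots> \<le> (\<Sum>x\<in>?Vv. D)"
  proof (rule sum_mono)
    fix x assume x: "x \<in> ?Vv"
    have "card (?N x) = S (cell v) (cell u)" using Sreg_cnt[OF sr _ cu] x by auto
    also have "\<dots> \<le> (\<Sum>j<k. S (cell v) j)" by (rule member_le_sum) (use cu in auto)
    also have "\<dots> \<le> D" using dl[OF cv] .
    finally show "card (?N x) \<le> D" .
  qed
  also have "\<dots> = D * csz n cell (cell v)" unfolding csz_def by simp
  finally show ?thesis .
qed

lemma crossing:
  assumes "E\<^sup>*\<^sup>* a b" "a \<in> X" "b \<notin> X"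
  shows "\<exists>v u. v \<in> X \<and> u \<notin> X \<and> E v u"
  using assms
proof (induction rule: rtranclp_induct)
  case base thus ?case by simp
next
  case (step y z)
  show ?case
  proof (cases "y \<in> X")
    case True thus ?thesis using step by blast
  next
    case False thus ?thesis using step by blast
  qed
qed

lemma csz_large:
  assumes sr: "S_regular k S n E cell" and dl: "\<And>i. i < k \<Longrightarrow> (\<Sum>j<k. S i j) \<le> D"
    and D1: "D \<ge> 1" and i0: "i0 < k"
  shows "n \<le> k * D^k * csz n cell i0"
proof -
  let ?m0 = "csz n cell i0"
  define J where "J t = {j. j < k \<and> csz n cell j \<le> D^t * ?m0}" for t
  have Jmono: "J t \<subseteq> J (Suc t)" for t
  proof
    fix j assume j: "j \<in> J t"
    have h: "D^t * ?m0 \<le> D^Suc t * ?m0" using D1 by (intro mult_right_mono) (auto simp: power_increasing)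
    have j1: "j < k" and j2: "csz n cell j \<le> D^t * ?m0" using j unfolding J_def by auto
    have "csz n cell j \<le> D^Suc t * ?m0" by (rule order_trans[OF j2 h])
    thus "j \<in> J (Suc t)" using j1 unfolding J_def by blast
  qed
  have Jmono': "J t \<subseteq> J t'" if "t \<le> t'" for t t'
    using that by (induction t' rule: dec_induct) (use Jmono in blast)+
  have all: "\<forall>j<k. csz n cell j \<le> D^k * ?m0"
  proof (rule ccontr)
    assume "\<not> ?thesis"
    then obtain js where js: "js < k" "csz n cell js > D^k * ?m0" by auto
    have jsJ: "js \<notin> J t" if "t \<le> k" for t using Jmono'[OF that] js unfolding J_def by auto
    show False
    proof (cases "\<exists>t<k. J (Suc t) \<subseteq> J t")
      case True
      then obtain t where t: "t < k" "J (Suc t) \<subseteq> J t" by blast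
      define X where "X = {v. v < n \<and> cell v \<in> J t}"
      obtain a where a: "a < n" "cell a = i0" using Sreg_ne[OF sr i0] by blast
      obtain b where b: "b < n" "cell b = js" using Sreg_ne[OF sr js(1)] by blast
      have "i0 \<in> J 0" unfolding J_def using i0 by simp
      hence aX: "a \<in> X" unfolding X_def using a Jmono'[of 0 t] by auto
      have bX: "b \<notin> X" unfolding X_def using b jsJ[of t] t by auto
      have "E\<^sup>*\<^sup>* a b" using Sreg_conn[OF sr] a b unfolding connected_graph_def by blast
      from crossing[OF this aX bX] obtain v u where vu: "v \<in> X" "u \<notin> X" "E v u" by blast
      have un: "u < n" using Sreg_E[OF sr vu(3)] by simp
      have cu: "cell u < k" using Sreg_cell[OF sr un] .
      have "cell u \<notin> J (Suc t)" using vu(2) t(2) un unfolding X_def by auto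
      hence "csz n cell (cell u) > D^Suc t * ?m0" unfolding J_def using cu by auto
      moreover have "csz n cell (cell u) \<le> D * csz n cell (cell v)" by (rule csz_step[OF sr dl vu(3)])
      moreover have "csz n cell (cell v) \<le> D^t * ?m0" using vu(1) unfolding X_def J_def by auto
      moreover have "D * csz n cell (cell v) \<le> D * (D^t * ?m0)"
        by (rule mult_left_mono) (use \<open>csz n cell (cell v) \<le> D^t * ?m0\<close> in simp_all)
      moreover have "D^Suc t * ?m0 = D * (D^t * ?m0)" by (simp add: mult.assoc)
      ultimately show False by linarith
    next
      case False
      hence strict: "J t \<subset> J (Suc t)" if "t < k" for t using Jmono[of t] that by blast
      have "card (J t) \<ge> Suc t" if "t \<le> k" for t
        using that
      proof (induction t)
        case 0
        have "i0 \<in> J 0" unfolding J_def using i0 by simp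
        moreover have "finite (J 0)" unfolding J_def by auto
        ultimately show ?case by (auto simp: card_gt_0_iff Suc_le_eq)
      next
        case (Suc t)
        have "finite (J (Suc t))" unfolding J_def by auto
        hence "card (J t) < card (J (Suc t))" using strict[of t] Suc.prems by (intro psubset_card_mono) auto
        thus ?case using Suc by simp
      qed
      hence "card (J k) \<ge> Suc k" by simp
      moreover have "card (J k) \<le> k" using card_mono[of "{..<k}" "J k"] unfolding J_def by auto
      ultimately show False by simp
    qed
  qed
  have "n = (\<Sum>u<n. 1::nat)" by simp
  also have "\<dots> = (\<Sum>j<k. csz n cell j)" unfolding sum_cells[OF sr] csz_def by simp
  also have "\<dots> \<le> (\<Sum>j<k. D^k * ?m0)" using all by (intro sum_mono) auto
  also have "\<dots> = k * D^k * ?m0" by simp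
  finally show ?thesis .
qed


lemma deg_le:
  assumes sr: "S_regular k S n E cell" and dl: "\<And>i. i < k \<Longrightarrow> (\<Sum>j<k. S i j) \<le> D" and u: "u < n"
  shows "card {w. w < n \<and> E u w} \<le> D"
  using deg[OF sr u] dl[OF Sreg_cell[OF sr u]] by simp

lemma sum_ind_set: "finite A \<Longrightarrow> (\<Sum>w\<in>A. (if w = a then 1 else 0)) = (if a \<in> A then 1 else (0::real))"
  by (simp add: sum.delta)

lemma test_fq:
  assumes sr: "S_regular k S n E cell" and v0: "v0 < n" and v1: "v1 < n"
    and nocommon: "\<And>u. E u v0 \<Longrightarrow> \<not> E u v1"
  shows "fq n E (\<lambda>w. (if w = v0 then 1 else 0) - (if w = v1 then 1 else 0))
         = real (card {u. u < n \<and> E v0 u}) + real (card {u. u < n \<and> E v1 u})"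
proof -
  have sym: "E a b \<longleftrightarrow> E b a" for a b using Sreg_E[OF sr] by blast
  have inner: "(\<Sum>w\<in>{w. w < n \<and> E u w}. (if w = v0 then 1 else 0) - (if w = v1 then 1 else (0::real)))
      = (if E u v0 then 1 else 0) - (if E u v1 then 1 else 0)" if "u < n" for u
    unfolding sum_subtractf using v0 v1 by (simp add: sum_ind_set)
  have sq: "((if E u v0 then 1 else 0) - (if E u v1 then 1 else (0::real)))^2
      = (if E u v0 then 1 else 0) + (if E u v1 then 1 else 0)" for u
    using nocommon[of u] by auto
  have cnt: "(\<Sum>u<n. if E u a then 1 else (0::real)) = real (card {u. u < n \<and> E a u})" for a
  proof -
    have "(\<Sum>u<n. if E u a then 1 else (0::real)) = (\<Sum>u<n. if u \<in> {u. E a u} then 1 else 0)"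
      by (intro sum.cong) (auto simp: sym)
    also have "\<dots> = (\<Sum>u\<in>{..<n} \<inter> {u. E a u}. (1::real))" by (rule sum.inter_restrict[symmetric]) simp
    also have "\<dots> = real (card ({..<n} \<inter> {u. E a u}))" by simp
    also have "{..<n} \<inter> {u. E a u} = {u. u < n \<and> E a u}" by auto
    finally show ?thesis .
  qed
  have "fq n E (\<lambda>w. (if w = v0 then 1 else 0) - (if w = v1 then 1 else 0))
      = (\<Sum>u<n. (if E u v0 then 1 else 0) + (if E u v1 then 1 else (0::real)))"
    unfolding fq_alt2 by (intro sum.cong) (simp_all add: inner sq)
  also have "\<dots> = real (card {u. u < n \<and> E v0 u}) + real (card {u. u < n \<and> E v1 u})"
    unfolding sum.distrib cnt ..
  finally show ?thesis .
qed

theorem mainTheorem12: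
  fixes k :: nat and S :: "nat \<Rightarrow> nat \<Rightarrow> nat"
  shows "\<forall>\<epsilon>>0. \<exists>N. \<forall>n E cell. N \<le> n \<and> k < n \<and> S_regular k S n E cell \<longrightarrow>
           lambda_B n E k cell > sqrt (lambda_S k S) - \<epsilon>"
proof (intro allI impI)
  fix \<epsilon> :: real assume eps: "\<epsilon> > 0"
  define D where "D = (\<Sum>i<k. \<Sum>j<k. S i j) + 1"
  have dl: "(\<Sum>j<k. S i j) \<le> D" if "i < k" for i
  proof -
    have "(\<Sum>j<k. S i j) \<le> (\<Sum>i<k. \<Sum>j<k. S i j)" by (rule member_le_sum) (use that in auto)
    thus ?thesis unfolding D_def by simp
  qed
  have D1: "D \<ge> 1" unfolding D_def by simp
  define N where "N = k * D^k * (D*D + 1) + 1"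
  show "\<exists>N. \<forall>n E cell. N \<le> n \<and> k < n \<and> S_regular k S n E cell \<longrightarrow>
           lambda_B n E k cell > sqrt (lambda_S k S) - \<epsilon>"
  proof (intro exI[of _ N] allI impI)
    fix n E cell assume H: "N \<le> n \<and> k < n \<and> S_regular k S n E cell"
    hence sr: "S_regular k S n E cell" and Nn: "N \<le> n" and kn: "k < n" by auto
    have kpos: "0 < k" using Sreg_cell[OF sr, of 0] kn by auto
    obtain i0 where i0: "i0 < k" and i0max: "\<And>i. i < k \<Longrightarrow> (\<Sum>j<k. S i j) \<le> (\<Sum>j<k. S i0 j)"
    proof -
      have "finite ((\<lambda>i. \<Sum>j<k. S i j) ` {..<k})" "(\<lambda>i. \<Sum>j<k. S i j) ` {..<k} \<noteq> {}" using kpos by auto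
      hence "Max ((\<lambda>i. \<Sum>j<k. S i j) ` {..<k}) \<in> (\<lambda>i. \<Sum>j<k. S i j) ` {..<k}" by (rule Max_in)
      then obtain i0 where "i0 < k" "Max ((\<lambda>i. \<Sum>j<k. S i j) ` {..<k}) = (\<Sum>j<k. S i0 j)" by auto
      moreover have "(\<Sum>j<k. S i j) \<le> Max ((\<lambda>i. \<Sum>j<k. S i j) ` {..<k})" if "i < k" for i
        by (rule Max_ge) (use that in auto)
      ultimately show ?thesis using that by metis
    qed
    define Dl where "Dl = (\<Sum>j<k. S i0 j)"
    have lS: "lambda_S k S \<le> real Dl" unfolding Dl_def by (rule lambda_S_bound[OF sr kpos i0max])
    define m0 where "m0 = csz n cell i0"
    have nle: "n \<le> k * D^k * m0" unfolding m0_def by (rule csz_large[OF sr dl D1 i0])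
    have m0big: "m0 > D*D + 1"
    proof (rule ccontr)
      assume "\<not> ?thesis"
      hence "k * D^k * m0 \<le> k * D^k * (D*D+1)" by (intro mult_left_mono) auto
      thus False using nle Nn unfolding N_def by linarith
    qed
    obtain v0 where v0: "v0 < n" "cell v0 = i0" using Sreg_ne[OF sr i0] by blast
    define B0 where "B0 = insert v0 (\<Union>u\<in>{u. u < n \<and> E v0 u}. {w. w < n \<and> E u w})"
    have "card B0 \<le> Suc (card (\<Union>u\<in>{u. u < n \<and> E v0 u}. {w. w < n \<and> E u w}))"
      unfolding B0_def by (rule card_insert_le_m1) auto
    also have "card (\<Union>u\<in>{u. u < n \<and> E v0 u}. {w. w < n \<and> E u w}) \<le> (\<Sum>u\<in>{u. u < n \<and> E v0 u}. card {w. w < n \<and> E u w})"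
      by (rule card_UN_le) auto
    also have "\<dots> \<le> (\<Sum>u\<in>{u. u < n \<and> E v0 u}. D)" by (intro sum_mono deg_le[OF sr dl]) auto
    also have "\<dots> = D * card {u. u < n \<and> E v0 u}" by simp
    also have "\<dots> \<le> D * D" using deg_le[OF sr dl v0(1)] by simp
    finally have cB0: "card B0 \<le> D * D + 1" by simp
    have "\<not> {v. v < n \<and> cell v = i0} \<subseteq> B0"
    proof
      assume "{v. v < n \<and> cell v = i0} \<subseteq> B0"
      hence "m0 \<le> card B0" unfolding m0_def csz_def B0_def by (intro card_mono) auto
      thus False using cB0 m0big by simp
    qed
    then obtain v1 where v1: "v1 < n" "cell v1 = i0" "v1 \<notin> B0" by blast
    have v10: "v1 \<noteq> v0" using v1 unfolding B0_def by auto
    have nocommon: "\<not> E u v1" if "E u v0" for u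
    proof
      assume "E u v1"
      have "u < n" "E v0 u" using Sreg_E[OF sr that] by auto
      thus False using v1 \<open>E u v1\<close> Sreg_E[OF sr \<open>E u v1\<close>] unfolding B0_def by blast
    qed
    define x0 where "x0 = (\<lambda>w. (if w = v0 then 1 else 0) - (if w = v1 then 1 else (0::real)))"
    have x0s: "x0 \<in> subsp n (Cperp k cell)" unfolding subsp_def
    proof (intro CollectI conjI allI impI ballI)
      fix v assume "n \<le> v" thus "x0 v = 0" unfolding x0_def using v0 v1 by auto
    next
      fix c assume "c \<in> Cperp k cell"
      then obtain i where c: "c = (\<lambda>v. if cell v = i then 1 else 0)" unfolding Cperp_def by auto
      have "ip n c x0 = ip n x0 c" by (rule ip_comm)
      also have "\<dots> = c v0 - c v1" unfolding x0_def by (rule ip_delta[OF v0(1) v1(1)])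
      finally show "ip n c x0 = 0" unfolding c using v0 v1 by simp
    qed
    have x0x0: "ip n x0 x0 = 2" unfolding x0_def ip_delta[OF v0(1) v1(1)] using v10 by simp
    have "fq n E x0 = real (card {u. u < n \<and> E v0 u}) + real (card {u. u < n \<and> E v1 u})"
      unfolding x0_def by (rule test_fq[OF sr v0(1) v1(1) nocommon])
    hence fx0: "fq n E x0 = 2 * real Dl"
      unfolding deg[OF sr v0(1)] deg[OF sr v1(1)] Dl_def using v0 v1 by simp
    obtain z \<mu> where z: "z \<in> subsp n (Cperp k cell)" and znz: "\<exists>v<n. z v \<noteq> 0"
      and ev: "\<forall>v<n. Aop n E z v = \<mu> * z v" and bnd: "fq n E x0 \<le> \<mu>^2 * ip n x0 x0"
      using variational[OF Sreg_simple[OF sr] Wperp_inv[OF sr] x0s] x0x0 by auto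
    have mu2: "real Dl \<le> \<mu>^2" using bnd unfolding fx0 x0x0 by simp
    have bulk: "bulk_eigenvalue n E k cell \<mu>" unfolding bulk_eigenvalue_def
    proof (intro exI[of _ z] conjI allI impI)
      show "\<And>v. n \<le> v \<Longrightarrow> z v = 0" using z unfolding subsp_def by auto
      show "\<exists>v<n. z v \<noteq> 0" by fact
    next
      fix i assume i: "i < k"
      hence "(\<lambda>v. if cell v = i then 1 else 0) \<in> Cperp k cell" unfolding Cperp_def by auto
      hence "ip n (\<lambda>v. if cell v = i then 1 else 0) z = 0" using z unfolding subsp_def by auto
      thus "(\<Sum>v\<in>{v. v < n \<and> cell v = i}. z v) = 0" unfolding ip_ind .
    next
      fix v assume v: "v < n"
      show "(\<Sum>u\<in>{u. u < n \<and> E v u}. z u) = \<mu> * z v" using ev v unfolding Aop_def by auto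
    qed
    have "\<bar>\<mu>\<bar> \<le> lambda_B n E k cell" unfolding lambda_B_def
      by (rule Max_ge) (use finite_bulk[of n E k cell] bulk in auto)
    moreover have "sqrt (real Dl) \<le> \<bar>\<mu>\<bar>" using real_sqrt_le_mono[OF mu2] by simp
    moreover have "sqrt (lambda_S k S) \<le> sqrt (real Dl)" using lS by simp
    ultimately show "lambda_B n E k cell > sqrt (lambda_S k S) - \<epsilon>" using eps by linarith
  qed
qed

end
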